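(* Let ${\mathcal M}$ be a $q$-matroid on $\mathbb{F}_q^n$. If ${\mathcal M}$ is the uniform $q$-matroid $U(n,n)$ (i.e. $\rho(X)=\dim X$ for every subspace $X$), then $\chi(I_{{\mathcal M}})=0$; for every other $q$-matroid ${\mathcal M}$ on $\mathbb{F}_q^n$, $\chi(I_{{\mathcal M}})\neq0$.
   Context: A $q$-matroid is a pair $(E,\rho)$, $E=\mathbb{F}_q^n$, with $\rho$ from subspaces to $\mathbb{Z}_{\ge0}$ satisfying $0\le\rho(X)\le\dim X$, monotonicity, and $\rho(X+Y)+\rho(X\cap Y)\le\rho(X)+\rho(Y)$. A subspace $U$ is independent if $\rho(U)=\dim U$. The order complex $I_{{\mathcal M}}$ is the simplicial complex whose faces are the chains $V_1\subsetneq\cdots\subsetneq V_k$ ($k\ge0$, empty chain included) of nonzero independent subspaces, and $\chi(I_{{\mathcal M}})=\sum_{k\ge0}(-1)^{k-1}f_k$, where $f_k$ is the number of such chains with $k$ members. *)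

theory Defs
  imports "HOL-Analysis.Analysis"
begin

text \<open>Ground space E = F_q^n is modelled as the type 'a^'n, where 'a is a finite field
(q = CARD('a)) and n = CARD('n).\<close>

definition qsubspaces :: "('a::{finite,field}^'n) set set" where
  "qsubspaces = {X. vec.subspace X}"

definition subspace_sum :: "('a::field^'n) set \<Rightarrow> ('a^'n) set \<Rightarrow> ('a^'n) set" where
  "subspace_sum X Y = {x + y | x y. x \<in> X \<and> y \<in> Y}"

definition q_matroid :: "(('a::{finite,field}^'n) set \<Rightarrow> nat) \<Rightarrow> bool" where
  "q_matroid \<rho> \<longleftrightarrow>
     (\<forall>X. vec.subspace X \<longrightarrow> \<rho> X \<le> vec.dim X) \<and>
     (\<forall>X Y. vec.subspace X \<and> vec.subspace Y \<and> X \<subseteq> Y \<longrightarrow> \<rho> X \<le> \<rho> Y) \<and>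
     (\<forall>X Y. vec.subspace X \<and> vec.subspace Y \<longrightarrow>
        \<rho> (subspace_sum X Y) + \<rho> (X \<inter> Y) \<le> \<rho> X + \<rho> Y)"

definition q_independent :: "(('a::{finite,field}^'n) set \<Rightarrow> nat) \<Rightarrow> ('a^'n) set \<Rightarrow> bool" where
  "q_independent \<rho> U \<longleftrightarrow> vec.subspace U \<and> \<rho> U = vec.dim U"

definition uniform_full :: "(('a::{finite,field}^'n) set \<Rightarrow> nat) \<Rightarrow> bool" where
  "uniform_full \<rho> \<longleftrightarrow> (\<forall>X. vec.subspace X \<longrightarrow> \<rho> X = vec.dim X)"

text \<open>Faces of the order complex: finite sets of nonzero independent subspaces that are
totally ordered by strict inclusion (a chain V_1 \<subset> ... \<subset> V_k, k = card C; the empty chain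
is included).\<close>
definition indep_chains :: "(('a::{finite,field}^'n) set \<Rightarrow> nat) \<Rightarrow> ('a^'n) set set set" where
  "indep_chains \<rho> = {C. C \<subseteq> {U. q_independent \<rho> U \<and> U \<noteq> {0}} \<and>
        (\<forall>U\<in>C. \<forall>V\<in>C. U \<subseteq> V \<or> V \<subseteq> U)}"

definition face_count :: "(('a::{finite,field}^'n) set \<Rightarrow> nat) \<Rightarrow> nat \<Rightarrow> nat" where
  "face_count \<rho> k = card {C \<in> indep_chains \<rho>. card C = k}"

text \<open>chi = sum_{k>=0} (-1)^(k-1) f_k; f_k = 0 for k > card of the set of all subspaces.\<close>
definition euler_char :: "(('a::{finite,field}^'n) set \<Rightarrow> nat) \<Rightarrow> int" where
  "euler_char \<rho> = (\<Sum>k\<in>{0..card (qsubspaces :: ('a^'n) set set)}.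
                       - ((-1) ^ k) * int (face_count \<rho> k))"

end

theory Submission
  imports Defs "HOL-Library.FuncSet"
begin

lemma card_span_indep:
  fixes B :: "('a::{finite,field}^'n) set"
  assumes "vec.independent B"
  shows "card (vec.span B) = CARD('a) ^ card B"
proof -
  have "finite B" by simp
  then show ?thesis using assms
  proof (induction B rule: finite_induct)
    case empty
    then show ?case by simp
  next
    case (insert a B)
    have indB: "vec.independent B" using insert.prems vec.independent_mono by blast
    have aB: "a \<notin> vec.span B" using insert.prems insert.hyps
      by (simp add: vec.independent_insert)
    have eq: "vec.span (insert a B) = (\<lambda>(k,y). y + k *s a) ` (UNIV \<times> vec.span B)"
    proof
      show "vec.span (insert a B) \<subseteq> (\<lambda>(k,y). y + k *s a) ` (UNIV \<times> vec.span B)"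
      proof
        fix x assume "x \<in> vec.span (insert a B)"
        then obtain k where "x - k *s a \<in> vec.span B" using vec.span_breakdown_eq by blast
        then show "x \<in> (\<lambda>(k,y). y + k *s a) ` (UNIV \<times> vec.span B)"
          by (intro image_eqI[where x="(k, x - k *s a)"]) auto
      qed
      show "(\<lambda>(k,y). y + k *s a) ` (UNIV \<times> vec.span B) \<subseteq> vec.span (insert a B)"
        by (auto intro!: vec.span_add vec.span_scale simp: vec.span_base
             dest: subsetD[OF vec.span_mono[of B "insert a B"], rotated])
    qed
    have inj: "inj_on (\<lambda>(k,y). y + k *s a) (UNIV \<times> vec.span B)"
    proof (rule inj_onI, clarsimp)
      fix k y k' y'
      assume y: "y \<in> vec.span B" and y': "y' \<in> vec.span B" and e: "y + k *s a = y' + k' *s a"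
      have "(k - k') *s a = y' - y" using e by (simp add: algebra_simps vector_sub_rdistrib)
      hence "(k - k') *s a \<in> vec.span B" using y y' vec.span_diff by metis
      show "k = k' \<and> y = y'"
      proof (cases "k = k'")
        case True then show ?thesis using e by simp
      next
        case False
        hence "inverse (k - k') *s ((k - k') *s a) \<in> vec.span B"
          using \<open>(k - k') *s a \<in> vec.span B\<close> vec.span_scale by blast
        hence "(inverse (k - k') * (k - k')) *s a \<in> vec.span B" by (simp only: vec.scale_scale)
        hence "a \<in> vec.span B" using False by simp
        then show ?thesis using aB by blast
      qed
    qed
    have "card (vec.span (insert a B)) = card (UNIV::'a set) * card (vec.span B)"
      unfolding eq by (simp add: card_image[OF inj] card_cartesian_product)
    also have "\<dots> = CARD('a) ^ card (insert a B)" using insert indB by simp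
    finally show ?case .
  qed
qed

lemma card_subspace:
  fixes S :: "('a::{finite,field}^'n) set"
  assumes "vec.subspace S"
  shows "card S = CARD('a) ^ vec.dim S"
proof -
  obtain B where "B \<subseteq> S" "vec.independent B" "vec.span B = S" "card B = vec.dim S"
    using vec.basis_subspace_exists[OF assms] by metis
  then show ?thesis using card_span_indep by metis
qed

lemma dim_UNIV_vec: "vec.dim (UNIV :: ('a::{finite,field}^'n) set) = CARD('n)"
  by (simp add: card_cart_basis)

lemma card_complements:
  fixes z :: "('a::{finite,field}^'n) set"
  assumes zs: "vec.subspace z" and uz: "u \<in> z" and u0: "u \<noteq> 0" and dz: "vec.dim z = Suc j"
  shows "card {y. vec.subspace y \<and> y \<subseteq> z \<and> vec.dim y = j \<and> u \<notin> y} = CARD('a) ^ j"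
proof -
  have iu: "vec.independent {u}" using u0 by (simp add: vec.independent_insert)
  obtain B where uB: "{u} \<subseteq> B" and Bz: "B \<subseteq> z" and iB: "vec.independent B" and zB: "z \<subseteq> vec.span B"
    using vec.maximal_independent_subset_extend[of "{u}" z] uz iu by auto
  have spB: "vec.span B = z" using vec.span_subspace[OF Bz zB zs] .
  have fB: "finite B" by simp
  have cB: "card B = Suc j" using vec.dim_span_eq_card_independent[OF iB] spB dz by simp
  define B0 where "B0 = B - {u}"
  have uB': "u \<in> B" using uB by simp
  have cB0: "card B0 = j" using cB uB' by (simp add: B0_def)
  have BB0: "B = insert u B0" using uB' by (auto simp: B0_def)
  define gen where "gen g b = b + g b *s u" for g :: "'a^'n \<Rightarrow> 'a" and b
  define Y where "Y g = vec.span (gen g ` B0)" for g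
  have B0z: "B0 \<subseteq> z" using Bz by (auto simp: B0_def)
  have genz: "gen g ` B0 \<subseteq> z" for g
    using B0z uz zs by (auto simp: gen_def intro!: vec.subspace_add vec.subspace_scale)
  have Yz: "Y g \<subseteq> z" for g
    unfolding Y_def by (rule vec.span_minimal[OF genz zs])
  have K: "vec.span (insert u (gen g ` B0)) = z" for g
  proof -
    have "insert u (gen g ` B0) \<subseteq> vec.span B" using genz uz spB by auto
    moreover have "B \<subseteq> vec.span (insert u (gen g ` B0))"
    proof
      fix b assume "b \<in> B"
      show "b \<in> vec.span (insert u (gen g ` B0))"
      proof (cases "b = u")
        case True then show ?thesis by (simp add: vec.span_base)
      next
        case False
        hence bB0: "b \<in> B0" using \<open>b \<in> B\<close> by (simp add: B0_def)
        have "gen g b \<in> vec.span (insert u (gen g ` B0))" using bB0 by (simp add: vec.span_base)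
        moreover have "g b *s u \<in> vec.span (insert u (gen g ` B0))"
          by (simp add: vec.span_base vec.span_scale)
        ultimately have "gen g b - g b *s u \<in> vec.span (insert u (gen g ` B0))"
          by (rule vec.span_diff)
        then show ?thesis by (simp add: gen_def)
      qed
    qed
    ultimately have "vec.span (insert u (gen g ` B0)) = vec.span B"
      by (simp add: vec.span_eq)
    then show ?thesis using spB by simp
  qed
  have dgen: "vec.dim (gen g ` B0) \<le> j" for g
  proof -
    have "vec.dim (gen g ` B0) \<le> card (gen g ` B0)"
      by (rule vec.dim_le_card) (auto simp: vec.span_base)
    also have "\<dots> \<le> card B0" by (rule card_image_le) simp
    finally show ?thesis using cB0 by simp
  qed
  have uY: "u \<notin> Y g" for g
  proof
    assume "u \<in> Y g"
    hence "vec.span (insert u (gen g ` B0)) = Y g"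
      unfolding Y_def by (metis vec.span_redundant)
    hence "vec.dim (Y g) = Suc j" using K dz by simp
    then show False using dgen[of g] unfolding Y_def by simp
  qed
  have dY: "vec.dim (Y g) = j" for g
  proof -
    have "vec.dim (insert u (gen g ` B0)) = Suc j" using K dz by (metis vec.dim_span)
    moreover have "u \<notin> vec.span (gen g ` B0)" using uY unfolding Y_def .
    ultimately show ?thesis unfolding Y_def by (simp add: vec.dim_insert)
  qed
  let ?H = "{y. vec.subspace y \<and> y \<subseteq> z \<and> vec.dim y = j \<and> u \<notin> y}"
  let ?P = "PiE B0 (\<lambda>_. UNIV :: 'a set)"
  have inj: "inj_on Y ?P"
  proof (rule inj_onI)
    fix g g' assume g: "g \<in> ?P" and g': "g' \<in> ?P" and e: "Y g = Y g'"
    show "g = g'"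
    proof (rule PiE_ext[OF g g'])
      fix b assume b: "b \<in> B0"
      have "gen g b \<in> Y g" using b unfolding Y_def by (simp add: vec.span_base)
      moreover have "gen g' b \<in> Y g" using b e unfolding Y_def by (simp add: vec.span_base)
      ultimately have "gen g b - gen g' b \<in> Y g" unfolding Y_def by (rule vec.span_diff)
      hence d: "(g b - g' b) *s u \<in> Y g" by (simp add: gen_def vector_sub_rdistrib)
      show "g b = g' b"
      proof (rule ccontr)
        assume ne: "g b \<noteq> g' b"
        have "(inverse (g b - g' b) * (g b - g' b)) *s u \<in> Y g"
          using vec.span_scale[OF d[unfolded Y_def]] unfolding Y_def by (simp only: vec.scale_scale)
        hence "u \<in> Y g" using ne by simp
        then show False using uY by blast
      qed
    qed
  qed
  have img: "Y ` ?P = ?H"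
  proof
    show "Y ` ?P \<subseteq> ?H" using Yz uY dY by (auto simp: Y_def)
    show "?H \<subseteq> Y ` ?P"
    proof
      fix y assume yH: "y \<in> ?H"
      hence ys: "vec.subspace y" and yz: "y \<subseteq> z" and dy: "vec.dim y = j" and uy: "u \<notin> y" by auto
      have spy: "vec.span y = y" using ys by simp
      have uy': "u \<notin> vec.span y" using uy ys by (metis vec.span_eq_iff)
      have "vec.dim (insert u y) = Suc j" using uy' dy by (simp add: vec.dim_insert)
      hence "vec.dim (vec.span (insert u y)) \<ge> vec.dim z" using dz by simp
      moreover have "vec.span (insert u y) \<subseteq> z" using yz uz zs by (simp add: vec.span_minimal)
      ultimately have zy: "vec.span (insert u y) = z"
        using vec.subspace_dim_equal[of "vec.span (insert u y)" z] zs by simp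
      have ex: "\<exists>k. b - k *s u \<in> y" if "b \<in> B0" for b
        using that B0z zy vec.span_breakdown_eq[of b u y] spy by auto
      define g where "g = (\<lambda>b\<in>B0. - (SOME k. b - k *s u \<in> y))"
      have gP: "g \<in> ?P" by (simp add: g_def)
      have "gen g b \<in> y" if "b \<in> B0" for b
      proof -
        have "b - (SOME k. b - k *s u \<in> y) *s u \<in> y" using someI_ex[OF ex[OF that]] .
        then show ?thesis using that by (simp add: gen_def g_def)
      qed
      hence "gen g ` B0 \<subseteq> y" by auto
      hence "Y g \<subseteq> y" unfolding Y_def using ys by (rule vec.span_minimal)
      hence "Y g = y" using vec.subspace_dim_equal[of "Y g" y] ys dY dy by (simp add: Y_def)
      then show "y \<in> Y ` ?P" using gP by blast
    qed
  qed
  have "card ?H = card ?P" using card_image[OF inj] img by simp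
  also have "\<dots> = CARD('a) ^ j" using cB0 by (simp add: card_PiE)
  finally show ?thesis .
qed

definition chainsof :: "'b set set \<Rightarrow> 'b set set set" where
  "chainsof A = {C. C \<subseteq> A \<and> (\<forall>U\<in>C. \<forall>V\<in>C. U \<subseteq> V \<or> V \<subseteq> U)}"

definition chs :: "'b set set \<Rightarrow> int" where
  "chs A = (\<Sum>C\<in>chainsof A. (-1) ^ card C)"

lemma finite_chainsof: "finite A \<Longrightarrow> finite (chainsof A)"
  unfolding chainsof_def by (rule finite_subset[of _ "Pow A"]) auto

lemma chain_max:
  assumes "finite C" "C \<noteq> {}" "\<forall>U\<in>C. \<forall>V\<in>C. U \<subseteq> V \<or> V \<subseteq> U"
  shows "\<Union>C \<in> C"
  using assms
proof (induction C rule: finite_ne_induct)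
  case (singleton x) then show ?case by simp
next
  case (insert x F)
  have "\<Union>F \<in> F" using insert by auto
  hence "x \<subseteq> \<Union>F \<or> \<Union>F \<subseteq> x" using insert.prems by auto
  then show ?case using \<open>\<Union>F \<in> F\<close>
    by (metis Union_insert insertCI sup.absorb_iff1 sup.absorb_iff2)
qed

lemma chs_decomp:
  assumes fA: "finite A"
  shows "chs A = 1 - (\<Sum>x\<in>A. chs {y\<in>A. y \<subset> x})"
proof -
  let ?S = "chainsof A - {{}}"
  have fS: "finite ?S" using finite_chainsof[OF fA] by simp
  have e0: "{} \<in> chainsof A" by (simp add: chainsof_def)
  have "chs A = (\<Sum>C\<in>insert {} ?S. (-1) ^ card C)"
    unfolding chs_def using e0 by (simp add: insert_absorb)
  also have "\<dots> = 1 + (\<Sum>C\<in>?S. (-1) ^ card C)"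
    using fS by (subst sum.insert) auto
  also have "(\<Sum>C\<in>?S. (-1) ^ card C) = (\<Sum>x\<in>A. \<Sum>C\<in>{C. C \<in> ?S \<and> \<Union>C = x}. (-1::int) ^ card C)"
  proof (rule sum.group[symmetric, OF fS fA])
    show "Union ` ?S \<subseteq> A"
    proof
      fix y assume "y \<in> Union ` ?S"
      then obtain C where C: "C \<in> ?S" "y = \<Union>C" by blast
      have fC: "finite C" using C fA by (auto simp: chainsof_def intro: finite_subset)
      have "\<Union>C \<in> C" using chain_max[OF fC] C by (auto simp: chainsof_def)
      then show "y \<in> A" using C by (auto simp: chainsof_def)
    qed
  qed
  also have "\<dots> = (\<Sum>x\<in>A. - chs {y\<in>A. y \<subset> x})"
  proof (rule sum.cong[OF refl])
    fix x assume xA: "x \<in> A"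
    let ?A' = "{y\<in>A. y \<subset> x}"
    have eq: "{C. C \<in> ?S \<and> \<Union>C = x} = insert x ` chainsof ?A'"
    proof
      show "{C. C \<in> ?S \<and> \<Union>C = x} \<subseteq> insert x ` chainsof ?A'"
      proof
        fix C assume "C \<in> {C. C \<in> ?S \<and> \<Union>C = x}"
        hence C: "C \<in> chainsof A" "C \<noteq> {}" "\<Union>C = x" by auto
        have fC: "finite C" using C fA by (auto simp: chainsof_def intro: finite_subset)
        have xC: "x \<in> C" using chain_max[OF fC] C by (auto simp: chainsof_def)
        have "C - {x} \<in> chainsof ?A'" using C by (auto simp: chainsof_def)
        moreover have "C = insert x (C - {x})" using xC by auto
        ultimately show "C \<in> insert x ` chainsof ?A'" by blast
      qed
      show "insert x ` chainsof ?A' \<subseteq> {C. C \<in> ?S \<and> \<Union>C = x}"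
        using xA by (auto simp: chainsof_def)
    qed
    have inj: "inj_on (insert x) (chainsof ?A')"
      by (rule inj_onI) (auto simp: chainsof_def)
    have fA': "finite (chainsof ?A')" using fA by (intro finite_chainsof) simp
    have "(\<Sum>C\<in>{C. C \<in> ?S \<and> \<Union>C = x}. (-1::int) ^ card C)
          = (\<Sum>C\<in>chainsof ?A'. (-1) ^ card (insert x C))"
      unfolding eq by (rule sum.reindex[OF inj, unfolded comp_def])
    also have "\<dots> = (\<Sum>C\<in>chainsof ?A'. - ((-1) ^ card C))"
    proof (rule sum.cong[OF refl])
      fix C assume C: "C \<in> chainsof ?A'"
      have "x \<notin> C" "finite C" using C fA by (auto simp: chainsof_def intro: finite_subset)
      then show "(-1::int) ^ card (insert x C) = - ((-1) ^ card C)" by simp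
    qed
    also have "\<dots> = - chs ?A'" by (simp add: chs_def sum_negf)
    finally show "(\<Sum>C\<in>{C. C \<in> ?S \<and> \<Union>C = x}. (-1::int) ^ card C) = - chs ?A'" .
  qed
  finally show ?thesis by (simp add: sum_negf)
qed

definition Psi :: "('a::{finite,field}^'n) set \<Rightarrow> int" where
  "Psi x = (if x = {0} then 1 else - chs {y. vec.subspace y \<and> y \<noteq> {0} \<and> y \<subset> x})"

lemma Psi_sum:
  fixes x :: "('a::{finite,field}^'n) set"
  assumes xs: "vec.subspace x" and x0: "x \<noteq> {0}"
  shows "(\<Sum>y\<in>{y. vec.subspace y \<and> y \<subseteq> x}. Psi y) = 0"
proof -
  let ?A = "{y. vec.subspace y \<and> y \<noteq> {0} \<and> y \<subset> x}"
  have "chs ?A = 1 - (\<Sum>y\<in>?A. chs {w\<in>?A. w \<subset> y})" by (rule chs_decomp) simp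
  also have "(\<Sum>y\<in>?A. chs {w\<in>?A. w \<subset> y}) = (\<Sum>y\<in>?A. - Psi y)"
  proof (rule sum.cong[OF refl])
    fix y assume y: "y \<in> ?A"
    have "{w\<in>?A. w \<subset> y} = {w. vec.subspace w \<and> w \<noteq> {0} \<and> w \<subset> y}" using y by auto
    then show "chs {w\<in>?A. w \<subset> y} = - Psi y" using y by (simp add: Psi_def)
  qed
  finally have cA: "chs ?A = 1 + (\<Sum>y\<in>?A. Psi y)" by (simp add: sum_negf)
  have z0: "vec.subspace {0::'a^'n}" by (simp add: vec.subspace_def)
  have zx0: "{0} \<subseteq> x" using xs vec.subspace_0 by blast
  have eq: "{y. vec.subspace y \<and> y \<subseteq> x} = insert x (insert {0} ?A)"
    using xs z0 zx0 x0 by auto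
  have "(\<Sum>y\<in>{y. vec.subspace y \<and> y \<subseteq> x}. Psi y) = Psi x + (Psi ({0}::('a^'n) set) + (\<Sum>y\<in>?A. Psi y))"
  proof -
    have n1: "x \<notin> insert {0} ?A" using x0 by auto
    have n2: "{0} \<notin> ?A" by auto
    show ?thesis unfolding eq using n1 n2 by (simp add: sum.insert)
  qed
  also have "\<dots> = 0" using x0 cA by (simp add: Psi_def)
  finally show ?thesis .
qed

fun mw :: "nat \<Rightarrow> nat \<Rightarrow> nat" where
  "mw q 0 = 1"
| "mw q (Suc k) = q ^ k * mw q k"

definition wt :: "nat \<Rightarrow> nat \<Rightarrow> int" where
  "wt q d = (-1) ^ d * int (mw q d)"

lemma wt_Suc: "wt q (Suc k) = - (int q ^ k) * wt q k"
  by (simp add: wt_def)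

lemma dim_insert_sub:
  fixes y :: "('a::{finite,field}^'n) set"
  assumes "vec.subspace y" "u \<notin> y"
  shows "vec.dim (vec.span (insert u y)) = Suc (vec.dim y)"
proof -
  have "u \<notin> vec.span y" using assms by (metis vec.span_eq_iff)
  then show ?thesis by (simp add: vec.dim_insert)
qed

lemma span_insert_eq:
  fixes y :: "('a::{finite,field}^'n) set"
  assumes ys: "vec.subspace y" and zs: "vec.subspace z" and yz: "y \<subseteq> z" and uz: "u \<in> z"
    and uy: "u \<notin> y" and d: "vec.dim z = Suc (vec.dim y)"
  shows "vec.span (insert u y) = z"
proof -
  have "vec.span (insert u y) \<subseteq> z" using yz uz zs by (simp add: vec.span_minimal)
  moreover have "vec.dim (vec.span (insert u y)) \<ge> vec.dim z" using dim_insert_sub[OF ys uy] d by simp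
  ultimately show ?thesis using vec.subspace_dim_equal[of "vec.span (insert u y)" z] zs by simp
qed

lemma dim_lt_psub:
  fixes y :: "('a::{finite,field}^'n) set"
  assumes "vec.subspace y" "vec.subspace x" "y \<subseteq> x" "y \<noteq> x"
  shows "vec.dim y < vec.dim x"
proof -
  have "vec.dim y \<le> vec.dim x" using assms by (simp add: vec.dim_subset)
  moreover have "vec.dim y \<noteq> vec.dim x" using assms vec.subspace_dim_equal by force
  ultimately show ?thesis by simp
qed

lemma weisner_sum:
  fixes x :: "('a::{finite,field}^'n) set"
  assumes xs: "vec.subspace x" and dx: "vec.dim x = Suc k"
  shows "(\<Sum>y\<in>{y. vec.subspace y \<and> y \<subseteq> x \<and> y \<noteq> x}. wt CARD('a) (vec.dim y))
         = int (CARD('a) ^ k) * wt CARD('a) k"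
proof -
  let ?q = "CARD('a)"
  let ?w = "\<lambda>y. wt ?q (vec.dim y)"
  have "\<not> x \<subseteq> {0}" using dx by (metis vec.dim_eq_0 nat.simps(3))
  then obtain u where ux: "u \<in> x" and u0: "u \<noteq> 0" by blast
  define Aset where "Aset = {y. vec.subspace y \<and> y \<subseteq> x \<and> u \<notin> y}"
  define Bset where "Bset = {z. vec.subspace z \<and> z \<subseteq> x \<and> z \<noteq> x \<and> u \<in> z}"
  define Atop where "Atop = {y. vec.subspace y \<and> y \<subseteq> x \<and> vec.dim y = k \<and> u \<notin> y}"
  define A' where "A' = {y\<in>Aset. vec.dim y \<noteq> k}"
  define Comp where "Comp z = {y. vec.subspace y \<and> y \<subseteq> z \<and> vec.dim y = vec.dim z - 1 \<and> u \<notin> y}" for z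
  have split1: "{y. vec.subspace y \<and> y \<subseteq> x \<and> y \<noteq> x} = Aset \<union> Bset"
    using ux by (auto simp: Aset_def Bset_def)
  have disj1: "Aset \<inter> Bset = {}" by (auto simp: Aset_def Bset_def)
  have split2: "Aset = Atop \<union> A'" by (auto simp: Aset_def Atop_def A'_def)
  have disj2: "Atop \<inter> A' = {}" by (auto simp: Atop_def A'_def)
  have cAtop: "card Atop = ?q ^ k"
    unfolding Atop_def using card_complements[OF xs ux u0 dx] by simp
  have sAtop: "(\<Sum>y\<in>Atop. ?w y) = int (?q ^ k) * wt ?q k"
    using cAtop by (simp add: Atop_def)
  have Bz: "(\<Sum>z\<in>Bset. ?w z) = - (\<Sum>z\<in>Bset. \<Sum>y\<in>Comp z. ?w y)"
  proof -
    have "?w z = - (\<Sum>y\<in>Comp z. ?w y)" if z: "z \<in> Bset" for z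
    proof -
      have zs: "vec.subspace z" and uz: "u \<in> z" using z by (auto simp: Bset_def)
      have "\<not> z \<subseteq> {0}" using uz u0 by auto
      hence "vec.dim z \<noteq> 0" by simp
      then obtain m where m: "vec.dim z = Suc m" by (metis not0_implies_Suc)
      have "card (Comp z) = ?q ^ m"
        unfolding Comp_def m using card_complements[OF zs uz u0 m] by simp
      hence "(\<Sum>y\<in>Comp z. ?w y) = int (?q ^ m) * wt ?q m"
        by (simp add: Comp_def m)
      then show ?thesis using m wt_Suc by simp
    qed
    then show ?thesis by (simp add: sum_negf[symmetric])
  qed
  have U: "(\<Sum>z\<in>Bset. \<Sum>y\<in>Comp z. ?w y) = (\<Sum>y\<in>(\<Union>z\<in>Bset. Comp z). ?w y)"
  proof (rule sum.UNION_disjoint[symmetric])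
    show "finite Bset" by simp
    show "\<forall>z\<in>Bset. finite (Comp z)" by simp
    show "\<forall>z1\<in>Bset. \<forall>z2\<in>Bset. z1 \<noteq> z2 \<longrightarrow> Comp z1 \<inter> Comp z2 = {}"
    proof (intro ballI impI)
      fix z1 z2 assume z1: "z1 \<in> Bset" and z2: "z2 \<in> Bset" and ne: "z1 \<noteq> z2"
      show "Comp z1 \<inter> Comp z2 = {}"
      proof (rule ccontr)
        assume "Comp z1 \<inter> Comp z2 \<noteq> {}"
        then obtain y where y1: "y \<in> Comp z1" and y2: "y \<in> Comp z2" by blast
        have "vec.span (insert u y) = z" if zB: "z \<in> Bset" and yC: "y \<in> Comp z" for z
        proof -
          have zs: "vec.subspace z" and uz: "u \<in> z" using zB by (auto simp: Bset_def)
          have "vec.dim z \<noteq> 0" using uz u0 by (metis vec.dim_eq_0 singletonD subsetD)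
          moreover have "vec.dim y = vec.dim z - 1" using yC by (simp add: Comp_def)
          ultimately have "vec.dim z = Suc (vec.dim y)" by linarith
          then show ?thesis using yC zs uz by (intro span_insert_eq) (auto simp: Comp_def)
        qed
        then show False using y1 y2 z1 z2 ne by metis
      qed
    qed
  qed
  have UA: "(\<Union>z\<in>Bset. Comp z) = A'"
  proof
    show "(\<Union>z\<in>Bset. Comp z) \<subseteq> A'"
    proof
      fix y assume "y \<in> (\<Union>z\<in>Bset. Comp z)"
      then obtain z where zB: "z \<in> Bset" and yC: "y \<in> Comp z" by blast
      have "vec.dim z < Suc k" using zB xs dx dim_lt_psub[of z x] by (auto simp: Bset_def)
      moreover have "vec.dim z \<noteq> 0" using zB u0 by (metis (mono_tags, lifting) Bset_def mem_Collect_eq singletonD subsetD vec.dim_eq_0)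
      moreover have "vec.dim y = vec.dim z - 1" using yC by (simp add: Comp_def)
      ultimately have "vec.dim y \<noteq> k" by linarith
      then show "y \<in> A'" using zB yC by (auto simp: Comp_def Bset_def A'_def Aset_def)
    qed
    show "A' \<subseteq> (\<Union>z\<in>Bset. Comp z)"
    proof
      fix y assume yA: "y \<in> A'"
      hence ys: "vec.subspace y" and yx: "y \<subseteq> x" and uy: "u \<notin> y" and dk: "vec.dim y \<noteq> k"
        by (auto simp: A'_def Aset_def)
      have "y \<noteq> x" using ux uy by auto
      hence "vec.dim y < Suc k" using dim_lt_psub[OF ys xs yx] dx by simp
      hence dlt: "vec.dim y < k" using dk by simp
      define z where "z = vec.span (insert u y)"
      have dz: "vec.dim z = Suc (vec.dim y)" unfolding z_def by (rule dim_insert_sub[OF ys uy])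
      have zx: "z \<subseteq> x" unfolding z_def using yx ux xs by (simp add: vec.span_minimal)
      have "z \<noteq> x" using dz dlt dx by auto
      hence "z \<in> Bset" using zx by (auto simp: Bset_def z_def vec.span_base)
      moreover have "y \<in> Comp z" using ys uy dz by (auto simp: Comp_def z_def vec.span_base)
      ultimately show "y \<in> (\<Union>z\<in>Bset. Comp z)" by blast
    qed
  qed
  have "(\<Sum>y\<in>{y. vec.subspace y \<and> y \<subseteq> x \<and> y \<noteq> x}. ?w y) = (\<Sum>y\<in>Aset. ?w y) + (\<Sum>y\<in>Bset. ?w y)"
    unfolding split1 by (rule sum.union_disjoint) (use disj1 in auto)
  also have "(\<Sum>y\<in>Aset. ?w y) = (\<Sum>y\<in>Atop. ?w y) + (\<Sum>y\<in>A'. ?w y)"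
    unfolding split2 by (rule sum.union_disjoint) (use disj2 in auto)
  also have "(\<Sum>y\<in>Bset. ?w y) = - (\<Sum>y\<in>A'. ?w y)" using Bz U UA by simp
  finally show ?thesis using sAtop by simp
qed

lemma Psi_formula:
  fixes x :: "('a::{finite,field}^'n) set"
  assumes "vec.subspace x"
  shows "Psi x = wt CARD('a) (vec.dim x)"
proof -
  have "\<forall>x::('a^'n) set. vec.subspace x \<and> vec.dim x = d \<longrightarrow> Psi x = wt CARD('a) d" for d
  proof (induction d rule: less_induct)
    case (less d)
    show ?case
    proof (intro allI impI, elim conjE)
      fix x :: "('a^'n) set" assume xs: "vec.subspace x" and dx: "vec.dim x = d"
      show "Psi x = wt CARD('a) d"
      proof (cases d)
        case 0
        hence "x \<subseteq> {0}" using dx by simp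
        hence "x = {0}" using xs vec.subspace_0 by blast
        then show ?thesis using 0 by (simp add: Psi_def wt_def)
      next
        case (Suc k)
        have x0: "x \<noteq> {0}" using dx Suc by auto
        let ?Sub = "{y. vec.subspace y \<and> y \<subseteq> x}"
        let ?Sub' = "{y. vec.subspace y \<and> y \<subseteq> x \<and> y \<noteq> x}"
        have eq: "?Sub = insert x ?Sub'" using xs by auto
        have "0 = (\<Sum>y\<in>?Sub. Psi y)" using Psi_sum[OF xs x0] by simp
        also have "\<dots> = Psi x + (\<Sum>y\<in>?Sub'. Psi y)" unfolding eq by (subst sum.insert) auto
        also have "(\<Sum>y\<in>?Sub'. Psi y) = (\<Sum>y\<in>?Sub'. wt CARD('a) (vec.dim y))"
        proof (rule sum.cong[OF refl])
          fix y assume y: "y \<in> ?Sub'"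
          have "vec.dim y < d" using dim_lt_psub[of y x] y xs dx by auto
          then show "Psi y = wt CARD('a) (vec.dim y)" using less y by auto
        qed
        also have "\<dots> = int (CARD('a) ^ k) * wt CARD('a) k"
          using weisner_sum[OF xs] dx Suc by simp
        finally show ?thesis using Suc wt_Suc by simp
      qed
    qed
  qed
  then show ?thesis using assms by blast
qed

lemma qm_dim: "q_matroid \<rho> \<Longrightarrow> vec.subspace X \<Longrightarrow> \<rho> X \<le> vec.dim X"
  unfolding q_matroid_def by blast
lemma qm_mono: "q_matroid \<rho> \<Longrightarrow> vec.subspace X \<Longrightarrow> vec.subspace Y \<Longrightarrow> X \<subseteq> Y \<Longrightarrow> \<rho> X \<le> \<rho> Y"
  unfolding q_matroid_def by blast
lemma qm_submod: "q_matroid \<rho> \<Longrightarrow> vec.subspace X \<Longrightarrow> vec.subspace Y \<Longrightarrow>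
    \<rho> (subspace_sum X Y) + \<rho> (X \<inter> Y) \<le> \<rho> X + \<rho> Y"
  unfolding q_matroid_def by blast

lemma subspace_sum_span:
  fixes X :: "('a::{finite,field}^'n) set"
  assumes "vec.subspace X" "vec.subspace Y"
  shows "subspace_sum X Y = vec.span (X \<union> Y)"
proof -
  have "vec.span (X \<union> Y) = {x + y |x y. x \<in> vec.span X \<and> y \<in> vec.span Y}" by (rule vec.span_Un)
  also have "\<dots> = {x + y |x y. x \<in> X \<and> y \<in> Y}"
  proof -
    have e1: "vec.span X = X" and e2: "vec.span Y = Y" using assms by simp_all
    show ?thesis by (simp only: e1 e2)
  qed
  finally show ?thesis by (simp add: subspace_sum_def)
qed

lemma subspace_Int:
  fixes X :: "('a::{finite,field}^'n) set"
  shows "vec.subspace X \<Longrightarrow> vec.subspace Y \<Longrightarrow> vec.subspace (X \<inter> Y)"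
  by (simp add: vec.subspace_def)

lemma rho_insert:
  fixes \<rho> :: "('a::{finite,field}^'n) set \<Rightarrow> nat"
  assumes qm: "q_matroid \<rho>" and Xs: "vec.subspace X"
  shows "\<rho> (vec.span (insert v X)) \<le> \<rho> X + 1"
proof -
  have vs: "vec.subspace (vec.span {v})" by simp
  have "\<rho> (subspace_sum X (vec.span {v})) + \<rho> (X \<inter> vec.span {v}) \<le> \<rho> X + \<rho> (vec.span {v})"
    by (rule qm_submod[OF qm Xs vs])
  moreover have "\<rho> (vec.span {v}) \<le> 1"
  proof -
    have "\<rho> (vec.span {v}) \<le> vec.dim (vec.span {v})" by (rule qm_dim[OF qm vs])
    also have "\<dots> \<le> 1" by simp
    finally show ?thesis .
  qed
  moreover have "subspace_sum X (vec.span {v}) = vec.span (insert v X)"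
  proof -
    have "subspace_sum X (vec.span {v}) = vec.span (X \<union> vec.span {v})"
      by (rule subspace_sum_span[OF Xs vs])
    also have "\<dots> = vec.span (insert v X)"
    proof (subst vec.span_eq, rule conjI)
      show "X \<union> vec.span {v} \<subseteq> vec.span (insert v X)"
        using vec.span_superset[of "insert v X"] vec.span_mono[of "{v}" "insert v X"] by auto
      show "insert v X \<subseteq> vec.span (X \<union> vec.span {v})"
        by (auto intro: vec.span_base simp: vec.span_base)
    qed
    finally show ?thesis .
  qed
  ultimately have "\<rho> (vec.span (insert v X)) + \<rho> (X \<inter> vec.span {v}) \<le> \<rho> X + \<rho> (vec.span {v})"
    "\<rho> (vec.span {v}) \<le> 1" by simp_all
  then show ?thesis by linarith
qed

lemma rank_gap:
  fixes \<rho> :: "('a::{finite,field}^'n) set \<Rightarrow> nat"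
  assumes qm: "q_matroid \<rho>" and Us: "vec.subspace U"
  shows "vec.subspace X \<Longrightarrow> X \<subseteq> U \<Longrightarrow> \<rho> U + vec.dim X \<le> \<rho> X + vec.dim U"
proof (induction "vec.dim U - vec.dim X" arbitrary: X)
  case 0
  hence "X = U" using vec.subspace_dim_equal[of X U] Us by simp
  then show ?case by simp
next
  case (Suc k)
  hence "X \<noteq> U" by auto
  then obtain v where vU: "v \<in> U" and vX: "v \<notin> X" using Suc.prems by blast
  define X' where "X' = vec.span (insert v X)"
  have X's: "vec.subspace X'" by (simp add: X'_def)
  have X'U: "X' \<subseteq> U" unfolding X'_def using Suc.prems vU Us by (simp add: vec.span_minimal)
  have dX': "vec.dim X' = Suc (vec.dim X)" unfolding X'_def by (rule dim_insert_sub[OF Suc.prems(1) vX])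
  have "k = vec.dim U - vec.dim X'" using Suc.hyps(2) dX' by simp
  hence IH: "\<rho> U + vec.dim X' \<le> \<rho> X' + vec.dim U" using Suc.hyps(1) X's X'U by blast
  have "\<rho> X' \<le> \<rho> X + 1" unfolding X'_def by (rule rho_insert[OF qm Suc.prems(1)])
  then show ?case using IH dX' by simp
qed

lemma hereditary:
  fixes \<rho> :: "('a::{finite,field}^'n) set \<Rightarrow> nat"
  assumes qm: "q_matroid \<rho>" and U: "q_independent \<rho> U" and Xs: "vec.subspace X" and XU: "X \<subseteq> U"
  shows "q_independent \<rho> X"
proof -
  have Us: "vec.subspace U" and rU: "\<rho> U = vec.dim U" using U by (auto simp: q_independent_def)
  have "\<rho> U + vec.dim X \<le> \<rho> X + vec.dim U" by (rule rank_gap[OF qm Us Xs XU])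
  hence "vec.dim X \<le> \<rho> X" using rU by simp
  moreover have "\<rho> X \<le> vec.dim X" by (rule qm_dim[OF qm Xs])
  ultimately show ?thesis using Xs by (simp add: q_independent_def)
qed

lemma submod_step:
  fixes \<rho> :: "('a::{finite,field}^'n) set \<Rightarrow> nat"
  assumes qm: "q_matroid \<rho>" and ys: "vec.subspace y" and Xs: "vec.subspace X" and Ys: "vec.subspace Y"
    and yX: "y \<subseteq> X" and yY: "y \<subseteq> Y" and rX: "\<rho> X \<le> \<rho> y" and rY: "\<rho> Y \<le> \<rho> y"
  shows "\<rho> (vec.span (X \<union> Y)) \<le> \<rho> y"
proof -
  have "\<rho> (subspace_sum X Y) + \<rho> (X \<inter> Y) \<le> \<rho> X + \<rho> Y" by (rule qm_submod[OF qm Xs Ys])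
  moreover have "\<rho> y \<le> \<rho> (X \<inter> Y)" using yX yY by (intro qm_mono[OF qm ys subspace_Int[OF Xs Ys]]) auto
  moreover have "subspace_sum X Y = vec.span (X \<union> Y)" by (rule subspace_sum_span[OF Xs Ys])
  ultimately have "\<rho> (vec.span (X \<union> Y)) + \<rho> (X \<inter> Y) \<le> \<rho> X + \<rho> Y" "\<rho> y \<le> \<rho> (X \<inter> Y)"
    by simp_all
  then show ?thesis using rX rY by linarith
qed

lemma card_UNIV_vec: "card (UNIV :: ('a::{finite,field}^'n) set) = CARD('a) ^ CARD('n)"
  using card_subspace[of "UNIV :: ('a^'n) set"] dim_UNIV_vec by (simp add: vec.subspace_UNIV)

lemma q_ge2: "2 \<le> CARD('a::{finite,field})"
proof -
  have "{0::'a, 1} \<subseteq> UNIV" by simp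
  hence "card {0::'a, 1} \<le> CARD('a)" by (rule card_mono[rotated]) simp
  then show ?thesis by simp
qed

lemma span_sub: "vec.subspace S \<Longrightarrow> vec.span S = S"
  by simp

lemma ext_bound:
  fixes \<rho> :: "('a::{finite,field}^'n) set \<Rightarrow> nat"
  assumes qm: "q_matroid \<rho>" and yi: "q_independent \<rho> y" and lt: "\<rho> y < \<rho> UNIV"
  shows "CARD('a) ^ CARD('n) - CARD('a) ^ (CARD('n) - 1) \<le>
    card {v. q_independent \<rho> (vec.span (insert v y)) \<and> vec.dim (vec.span (insert v y)) = Suc (vec.dim y)}"
proof -
  let ?q = "CARD('a)" and ?n = "CARD('n)"
  have ys: "vec.subspace y" and ry: "\<rho> y = vec.dim y" using yi by (auto simp: q_independent_def)
  have spy: "vec.span y = y" using ys by simp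
  define G where "G = {v. \<rho> (vec.span (insert v y)) \<le> \<rho> y}"
  have Gs: "vec.subspace G"
    unfolding vec.subspace_def
  proof (intro conjI ballI allI)
    show "0 \<in> G" unfolding G_def using ys by (simp add: span_sub)
  next
    fix c v assume v: "v \<in> G"
    have "vec.span (insert (c *s v) y) \<subseteq> vec.span (insert v y)"
      by (rule vec.span_minimal) (auto intro: vec.span_scale vec.span_base vec.span_superset[THEN subsetD])
    hence "\<rho> (vec.span (insert (c *s v) y)) \<le> \<rho> (vec.span (insert v y))"
      using qm_mono[OF qm, of "vec.span (insert (c *s v) y)" "vec.span (insert v y)"] by simp
    then show "c *s v \<in> G" using v unfolding G_def by simp
  next
    fix v w assume v: "v \<in> G" and w: "w \<in> G"
    let ?X = "vec.span (insert v y)" and ?Y = "vec.span (insert w y)"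
    have "\<rho> (vec.span (?X \<union> ?Y)) \<le> \<rho> y"
      by (rule submod_step[OF qm ys]) (use v w spy in \<open>auto simp: G_def intro: vec.span_superset[THEN subsetD]\<close>)
    moreover have "vec.span (insert (v + w) y) \<subseteq> vec.span (?X \<union> ?Y)"
    proof (rule vec.span_minimal)
      show "insert (v + w) y \<subseteq> vec.span (?X \<union> ?Y)"
      proof
        fix a assume a: "a \<in> insert (v + w) y"
        have "v \<in> vec.span (?X \<union> ?Y)" "w \<in> vec.span (?X \<union> ?Y)"
          by (auto intro!: vec.span_base simp: vec.span_base)
        moreover have "y \<subseteq> vec.span (?X \<union> ?Y)"
          by (auto intro!: vec.span_base simp: vec.span_base)
        ultimately show "a \<in> vec.span (?X \<union> ?Y)" using a by (auto intro: vec.span_add)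
      qed
    qed simp
    hence "\<rho> (vec.span (insert (v + w) y)) \<le> \<rho> (vec.span (?X \<union> ?Y))"
      using qm_mono[OF qm, of "vec.span (insert (v + w) y)" "vec.span (?X \<union> ?Y)"] by simp
    ultimately show "v + w \<in> G" unfolding G_def by simp
  qed
  have GU: "G \<noteq> UNIV"
  proof
    assume GU: "G = UNIV"
    have "\<rho> (vec.span (S \<union> y)) \<le> \<rho> y" if "finite S" for S
      using that
    proof (induction S rule: finite_induct)
      case empty then show ?case using ys by (simp add: span_sub)
    next
      case (insert v S)
      let ?X = "vec.span (S \<union> y)" and ?Y = "vec.span (insert v y)"
      have "\<rho> (vec.span (?X \<union> ?Y)) \<le> \<rho> y"
        by (rule submod_step[OF qm ys]) (use insert GU spy in \<open>auto simp: G_def intro: vec.span_superset[THEN subsetD]\<close>)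
      moreover have "vec.span (insert v S \<union> y) \<subseteq> vec.span (?X \<union> ?Y)"
        by (rule vec.span_mono) (auto intro: vec.span_superset[THEN subsetD])
      hence "\<rho> (vec.span (insert v S \<union> y)) \<le> \<rho> (vec.span (?X \<union> ?Y))"
        using qm_mono[OF qm, of "vec.span (insert v S \<union> y)" "vec.span (?X \<union> ?Y)"] by simp
      ultimately show ?case by simp
    qed
    from this[of UNIV] have "\<rho> (vec.span (UNIV :: ('a^'n) set)) \<le> \<rho> y" by simp
    then show False using lt by simp
  qed
  have dG: "vec.dim G \<le> ?n - 1"
  proof -
    have "vec.dim G \<le> ?n" using vec.dim_subset[of G UNIV] by (simp add: card_cart_basis)
    moreover have "vec.dim G \<noteq> ?n"
      using vec.subspace_dim_equal[of G UNIV] Gs GU by (force simp add: vec.subspace_UNIV card_cart_basis)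
    ultimately show ?thesis by simp
  qed
  have cG: "card G \<le> ?q ^ (?n - 1)"
    using card_subspace[OF Gs] dG power_increasing[of "vec.dim G" "?n - 1" ?q] q_ge2[where 'a='a] by simp
  have sub: "UNIV - G \<subseteq> {v. q_independent \<rho> (vec.span (insert v y)) \<and> vec.dim (vec.span (insert v y)) = Suc (vec.dim y)}"
  proof
    fix v assume "v \<in> UNIV - G"
    hence vG: "\<rho> y < \<rho> (vec.span (insert v y))" by (simp add: G_def)
    let ?s = "vec.span (insert v y)"
    have vy: "v \<notin> y"
    proof
      assume "v \<in> y"
      hence "?s = y" using spy by (metis vec.span_redundant)
      then show False using vG by simp
    qed
    have ds: "vec.dim ?s = Suc (vec.dim y)" by (rule dim_insert_sub[OF ys vy])
    have "\<rho> ?s \<le> vec.dim ?s" using qm_dim[OF qm, of ?s] by simp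
    hence "\<rho> ?s = vec.dim ?s" using vG ry ds by simp
    then show "v \<in> {u. q_independent \<rho> (vec.span (insert u y)) \<and> vec.dim (vec.span (insert u y)) = Suc (vec.dim y)}"
      using ds by (simp add: q_independent_def)
  qed
  have "?q ^ ?n - ?q ^ (?n - 1) \<le> card (UNIV :: ('a^'n) set) - card G" using cG card_UNIV_vec by simp
  also have "\<dots> = card (UNIV - G)" by (simp add: card_Diff_subset)
  also have "\<dots> \<le> card {v. q_independent \<rho> (vec.span (insert v y)) \<and> vec.dim (vec.span (insert v y)) = Suc (vec.dim y)}"
    by (rule card_mono[OF _ sub]) simp
  finally show ?thesis .
qed

lemma count_ineq:
  fixes \<rho> :: "('a::{finite,field}^'n) set \<Rightarrow> nat"
  assumes qm: "q_matroid \<rho>" and kr: "Suc k \<le> \<rho> UNIV"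
  shows "card {x. q_independent \<rho> x \<and> vec.dim x = k} * (CARD('a) ^ CARD('n) - CARD('a) ^ (CARD('n) - 1))
     \<le> card {x. q_independent \<rho> x \<and> vec.dim x = Suc k} * ((CARD('a) ^ Suc k - 1) * CARD('a) ^ k)"
proof -
  let ?q = "CARD('a)" and ?n = "CARD('n)"
  define I0 where "I0 = {x::('a^'n) set. q_independent \<rho> x \<and> vec.dim x = k}"
  define I1 where "I1 = {x::('a^'n) set. q_independent \<rho> x \<and> vec.dim x = Suc k}"
  define Ext where "Ext y = {v. q_independent \<rho> (vec.span (insert v y)) \<and> vec.dim (vec.span (insert v y)) = Suc (vec.dim y)}" for y :: "('a^'n) set"
  define Q where "Q = Sigma I0 Ext"
  define R where "R x = {(y,v). vec.subspace y \<and> y \<subseteq> x \<and> vec.dim y = k \<and> v \<in> x \<and> v \<notin> y}" for x :: "('a^'n) set"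
  have "card I0 * (?q ^ ?n - ?q ^ (?n - 1)) = (\<Sum>y\<in>I0. ?q ^ ?n - ?q ^ (?n - 1))" by simp
  also have "\<dots> \<le> (\<Sum>y\<in>I0. card (Ext y))"
  proof (rule sum_mono)
    fix y assume y: "y \<in> I0"
    hence yi: "q_independent \<rho> y" and "\<rho> y = k" by (auto simp: I0_def q_independent_def)
    hence "\<rho> y < \<rho> UNIV" using kr by simp
    then show "?q ^ ?n - ?q ^ (?n - 1) \<le> card (Ext y)" unfolding Ext_def by (rule ext_bound[OF qm yi])
  qed
  also have "\<dots> = card Q" unfolding Q_def by (simp add: card_SigmaI)
  also have "card Q \<le> card (\<Union>x\<in>I1. R x)"
  proof (rule card_mono)
    show "finite (\<Union>x\<in>I1. R x)" by simp
    show "Q \<subseteq> (\<Union>x\<in>I1. R x)"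
    proof
      fix p assume "p \<in> Q"
      then obtain y v where p: "p = (y, v)" and y: "y \<in> I0" and v: "v \<in> Ext y" by (auto simp: Q_def)
      have ys: "vec.subspace y" and dy: "vec.dim y = k" using y by (auto simp: I0_def q_independent_def)
      let ?x = "vec.span (insert v y)"
      have xI: "?x \<in> I1" using v dy by (simp add: Ext_def I1_def)
      have vy: "v \<notin> y"
      proof
        assume "v \<in> y"
        hence "?x = y" using ys by (metis vec.span_redundant span_sub)
        hence "vec.dim ?x = k" using dy by simp
        moreover have "vec.dim ?x = Suc k" using v dy unfolding Ext_def by blast
        ultimately show False by simp
      qed
      have "(y, v) \<in> R ?x" using ys dy vy by (auto simp: R_def intro: vec.span_base)
      then show "p \<in> (\<Union>x\<in>I1. R x)" using xI p by blast
    qed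
  qed
  also have "\<dots> \<le> (\<Sum>x\<in>I1. card (R x))" by (rule card_UN_le) simp
  also have "\<dots> = (\<Sum>x\<in>I1. (?q ^ Suc k - 1) * ?q ^ k)"
  proof (rule sum.cong[OF refl])
    fix x assume x: "x \<in> I1"
    hence xs: "vec.subspace x" and dx: "vec.dim x = Suc k" by (auto simp: I1_def q_independent_def)
    define C where "C v = {y. vec.subspace y \<and> y \<subseteq> x \<and> vec.dim y = k \<and> v \<notin> y}" for v
    have "R x = (\<lambda>(v,y). (y,v)) ` (SIGMA v:(x - {0}). C v)"
      by (auto simp: R_def C_def image_iff vec.subspace_0)
    moreover have "inj_on (\<lambda>(v,y). (y,v)) (SIGMA v:(x - {0}). C v)" by (auto simp: inj_on_def)
    ultimately have "card (R x) = card (SIGMA v:(x - {0}). C v)" by (simp add: card_image)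
    also have "\<dots> = (\<Sum>v\<in>x - {0}. card (C v))" by (simp add: card_SigmaI)
    also have "\<dots> = (\<Sum>v\<in>x - {0}. ?q ^ k)"
    proof (rule sum.cong[OF refl])
      fix v assume "v \<in> x - {0}"
      then show "card (C v) = ?q ^ k" unfolding C_def using card_complements[OF xs _ _ dx] by simp
    qed
    also have "\<dots> = card (x - {0}) * ?q ^ k" by simp
    also have "card (x - {0}) = ?q ^ Suc k - 1"
      using card_subspace[OF xs] dx vec.subspace_0[OF xs] by (simp add: card_Diff_singleton)
    finally show "card (R x) = (?q ^ Suc k - 1) * ?q ^ k" .
  qed
  also have "\<dots> = card I1 * ((?q ^ Suc k - 1) * ?q ^ k)" by simp
  finally show ?thesis unfolding I0_def I1_def .
qed

lemma alt_pos:
  fixes a :: "nat \<Rightarrow> nat"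
  assumes a0: "0 < a 0" and inc: "\<And>d. 0 < d \<Longrightarrow> d \<le> r \<Longrightarrow> a (d - 1) < a d"
  shows "0 < (-1) ^ r * (\<Sum>d\<le>r. (-1) ^ d * int (a d)) \<and> (-1) ^ r * (\<Sum>d\<le>r. (-1) ^ d * int (a d)) \<le> int (a r)"
  using inc
proof (induction r)
  case 0 then show ?case using a0 by simp
next
  case (Suc r)
  define T where "T = (-1) ^ r * (\<Sum>d\<le>r. (-1) ^ d * int (a d))"
  have IH: "0 < T \<and> T \<le> int (a r)" unfolding T_def using Suc by simp
  have lt: "a r < a (Suc r)" using Suc.prems[of "Suc r"] by simp
  have s: "(\<Sum>d\<le>Suc r. (-1) ^ d * int (a d)) = (\<Sum>d\<le>r. (-1) ^ d * int (a d)) + (-1) ^ Suc r * int (a (Suc r))"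
    by simp
  have m: "((-1::int) ^ Suc r) * ((-1) ^ Suc r) = 1" by (simp flip: power_add)
  have "(-1) ^ Suc r * (\<Sum>d\<le>Suc r. (-1) ^ d * int (a d)) = - T + int (a (Suc r))"
    unfolding s T_def by (simp add: algebra_simps m)
  then show ?case using IH lt by simp
qed

theorem corollary5p11:
  fixes \<rho> :: "('a::{finite,field}^'n) set \<Rightarrow> nat"
  assumes "q_matroid \<rho>"
  shows "(uniform_full \<rho> \<longrightarrow> euler_char \<rho> = 0) \<and>
         (\<not> uniform_full \<rho> \<longrightarrow> euler_char \<rho> \<noteq> 0)"
proof -
  note qm = assms
  let ?q = "CARD('a)" and ?n = "CARD('n)"
  let ?P = "{U::('a^'n) set. q_independent \<rho> U \<and> U \<noteq> {0}}"
  let ?I = "{U::('a^'n) set. q_independent \<rho> U}"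
  have ic: "indep_chains \<rho> = chainsof ?P" by (simp add: indep_chains_def chainsof_def)
  have E1: "euler_char \<rho> = - chs ?P"
  proof -
    let ?N = "card (qsubspaces :: ('a^'n) set set)"
    have fc: "finite (chainsof ?P)" by simp
    have img: "card ` chainsof ?P \<subseteq> {0..?N}"
    proof
      fix k assume "k \<in> card ` chainsof ?P"
      then obtain C where C: "C \<in> chainsof ?P" "k = card C" by blast
      have "C \<subseteq> qsubspaces" using C by (auto simp: chainsof_def qsubspaces_def q_independent_def)
      hence "card C \<le> ?N" by (rule card_mono[rotated]) simp
      then show "k \<in> {0..?N}" using C by simp
    qed
    have "chs ?P = (\<Sum>k\<in>{0..?N}. \<Sum>C\<in>{C. C \<in> chainsof ?P \<and> card C = k}. (-1::int) ^ card C)"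
      unfolding chs_def by (rule sum.group[symmetric, OF fc _ img]) simp
    also have "\<dots> = (\<Sum>k\<in>{0..?N}. (-1) ^ k * int (face_count \<rho> k))"
    proof (rule sum.cong[OF refl])
      fix k
      have "(\<Sum>C\<in>{C. C \<in> chainsof ?P \<and> card C = k}. (-1::int) ^ card C)
          = (\<Sum>C\<in>{C. C \<in> chainsof ?P \<and> card C = k}. (-1::int) ^ k)"
        by (rule sum.cong) auto
      also have "\<dots> = (-1) ^ k * int (face_count \<rho> k)"
        by (simp add: face_count_def ic)
      finally show "(\<Sum>C\<in>{C. C \<in> chainsof ?P \<and> card C = k}. (-1::int) ^ card C) = (-1) ^ k * int (face_count \<rho> k)" .
    qed
    finally show ?thesis unfolding euler_char_def by (simp add: sum_negf)
  qed
  have z0: "vec.subspace {0::'a^'n}" by (simp add: vec.subspace_def)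
  have i0: "q_independent \<rho> {0::'a^'n}"
    using qm_dim[OF qm z0] z0 by (simp add: q_independent_def)
  have E2: "chs ?P = (\<Sum>x\<in>?I. Psi x)"
  proof -
    have "chs ?P = 1 - (\<Sum>x\<in>?P. chs {y\<in>?P. y \<subset> x})" by (rule chs_decomp) simp
    also have "(\<Sum>x\<in>?P. chs {y\<in>?P. y \<subset> x}) = (\<Sum>x\<in>?P. - Psi x)"
    proof (rule sum.cong[OF refl])
      fix x assume x: "x \<in> ?P"
      have "{y\<in>?P. y \<subset> x} = {y. vec.subspace y \<and> y \<noteq> {0} \<and> y \<subset> x}"
        using x hereditary[OF qm] by (auto simp: q_independent_def)
      then show "chs {y\<in>?P. y \<subset> x} = - Psi x" using x by (simp add: Psi_def)
    qed
    finally have "chs ?P = Psi ({0}::('a^'n) set) + (\<Sum>x\<in>?P. Psi x)" by (simp add: sum_negf Psi_def)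
    also have "\<dots> = (\<Sum>x\<in>insert {0} ?P. Psi x)" by (subst sum.insert) auto
    also have "insert {0} ?P = ?I" using i0 by auto
    finally show ?thesis .
  qed
  have uniform: "euler_char \<rho> = 0" if u: "uniform_full \<rho>"
  proof -
    have "?I = {y. vec.subspace y \<and> y \<subseteq> UNIV}" using u by (auto simp: uniform_full_def q_independent_def)
    moreover have "(UNIV :: ('a^'n) set) \<noteq> {0}"
    proof
      assume h: "(UNIV :: ('a^'n) set) = {0}"
      have "card (UNIV :: ('a^'n) set) = 1" by (subst h) simp
      moreover have "card (UNIV :: ('a^'n) set) \<ge> 2"
        using card_UNIV_vec[where 'a='a and 'n='n] q_ge2[where 'a='a]
        by (metis One_nat_def Suc_le_eq le_trans one_le_numeral self_le_power zero_less_card_finite)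
      ultimately show False by simp
    qed
    ultimately have "(\<Sum>x\<in>?I. Psi x) = 0" using Psi_sum[of "UNIV :: ('a^'n) set"] by (simp add: vec.subspace_UNIV)
    then show ?thesis using E1 E2 by simp
  qed
  have nonuniform: "euler_char \<rho> \<noteq> 0" if nu: "\<not> uniform_full \<rho>"
  proof -
    define r where "r = \<rho> UNIV"
    define i where "i d = card {x::('a^'n) set. q_independent \<rho> x \<and> vec.dim x = d}" for d
    define a where "a d = mw ?q d * i d" for d
    have rn: "r < ?n"
    proof -
      obtain X where Xs: "vec.subspace X" and rX: "\<rho> X \<noteq> vec.dim X" using nu by (auto simp: uniform_full_def)
      have "r \<le> ?n" using qm_dim[OF qm, of UNIV] by (simp add: r_def vec.subspace_UNIV card_cart_basis)
      moreover have "r \<noteq> ?n"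
      proof
        assume "r = ?n"
        have "\<rho> UNIV + vec.dim X \<le> \<rho> X + vec.dim (UNIV :: ('a^'n) set)"
          by (rule rank_gap[OF qm vec.subspace_UNIV Xs]) simp
        hence "vec.dim X \<le> \<rho> X" using \<open>r = ?n\<close> by (simp add: r_def card_cart_basis)
        moreover have "\<rho> X \<le> vec.dim X" by (rule qm_dim[OF qm Xs])
        ultimately show False using rX by simp
      qed
      ultimately show ?thesis by simp
    qed
    have S: "(\<Sum>x\<in>?I. Psi x) = (\<Sum>d\<le>?n. (-1) ^ d * int (a d))"
    proof -
      have "(\<Sum>x\<in>?I. Psi x) = (\<Sum>x\<in>?I. wt ?q (vec.dim x))"
        by (rule sum.cong[OF refl]) (simp add: Psi_formula q_independent_def)
      also have "\<dots> = (\<Sum>d\<in>{..?n}. \<Sum>x\<in>{x. x \<in> ?I \<and> vec.dim x = d}. wt ?q (vec.dim x))"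
      proof (rule sum.group[symmetric])
        show "vec.dim ` ?I \<subseteq> {..?n}"
          using vec.dim_subset[of _ "UNIV :: ('a^'n) set"] by (auto simp: card_cart_basis)
      qed simp_all
      also have "\<dots> = (\<Sum>d\<le>?n. (-1) ^ d * int (a d))"
      proof (rule sum.cong[OF refl])
        fix d
        have "(\<Sum>x\<in>{x. x \<in> ?I \<and> vec.dim x = d}. wt ?q (vec.dim x)) = (\<Sum>x\<in>{x. x \<in> ?I \<and> vec.dim x = d}. wt ?q d)"
          by (rule sum.cong) auto
        also have "\<dots> = (-1) ^ d * int (a d)" by (simp add: a_def i_def wt_def)
        finally show "(\<Sum>x\<in>{x. x \<in> ?I \<and> vec.dim x = d}. wt ?q (vec.dim x)) = (-1) ^ d * int (a d)" .
      qed
      finally show ?thesis .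
    qed
    have a0: "a 0 = 1"
    proof -
      have "{x::('a^'n) set. q_independent \<rho> x \<and> vec.dim x = 0} = {{0}}"
      proof
        show "{x::('a^'n) set. q_independent \<rho> x \<and> vec.dim x = 0} \<subseteq> {{0}}"
          using vec.subspace_0 by (fastforce simp: q_independent_def)
        show "{{0}} \<subseteq> {x::('a^'n) set. q_independent \<rho> x \<and> vec.dim x = 0}" using i0 by simp
      qed
      then show ?thesis by (simp add: a_def i_def)
    qed
    have big: "a d = 0" if "r < d" for d
    proof -
      have "{x::('a^'n) set. q_independent \<rho> x \<and> vec.dim x = d} = {}"
      proof (rule ccontr)
        assume "{x::('a^'n) set. q_independent \<rho> x \<and> vec.dim x = d} \<noteq> {}"
        then obtain x :: "('a^'n) set" where "q_independent \<rho> x" "vec.dim x = d" by blast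
        hence "\<rho> x = d" "vec.subspace x" by (auto simp: q_independent_def)
        moreover have "\<rho> x \<le> r" unfolding r_def using \<open>vec.subspace x\<close>
          by (rule qm_mono[OF qm _ vec.subspace_UNIV]) simp
        ultimately show False using that by simp
      qed
      then show ?thesis by (simp add: a_def i_def)
    qed
    have step: "a k * (?q ^ ?n - ?q ^ (?n - 1)) \<le> a (Suc k) * (?q ^ Suc k - 1)" if "Suc k \<le> r" for k
    proof -
      have "i k * (?q ^ ?n - ?q ^ (?n - 1)) \<le> i (Suc k) * ((?q ^ Suc k - 1) * ?q ^ k)"
        using count_ineq[OF qm, of k] that by (simp add: i_def r_def)
      hence "mw ?q k * (i k * (?q ^ ?n - ?q ^ (?n - 1))) \<le> mw ?q k * (i (Suc k) * ((?q ^ Suc k - 1) * ?q ^ k))"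
        by (rule mult_le_mono2)
      then show ?thesis by (simp add: a_def algebra_simps)
    qed
    have gap: "?q ^ Suc k - 1 < ?q ^ ?n - ?q ^ (?n - 1)" if "Suc k \<le> r" for k
    proof -
      have q2: "2 \<le> ?q" by (rule q_ge2)
      have "Suc k \<le> ?n - 1" using that rn by simp
      hence "?q ^ Suc k \<le> ?q ^ (?n - 1)" using q2 by (intro power_increasing) simp_all
      moreover have "?q ^ ?n = ?q * ?q ^ (?n - 1)" using rn by (metis Suc_pred' gr0I less_nat_zero_code power_Suc)
      moreover have "2 * ?q ^ (?n - 1) \<le> ?q * ?q ^ (?n - 1)" using q2 by simp
      moreover have "0 < ?q ^ Suc k" using q2 by simp
      ultimately show ?thesis by linarith
    qed
    have inc: "0 < a k \<and> (0 < k \<longrightarrow> a (k - 1) < a k)" if "k \<le> r" for k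
      using that
    proof (induction k)
      case 0 then show ?case using a0 by simp
    next
      case (Suc k)
      have pos: "0 < a k" using Suc by simp
      have "a k * (?q ^ Suc k - 1) < a k * (?q ^ ?n - ?q ^ (?n - 1))"
        using gap[OF Suc.prems] pos by simp
      also have "\<dots> \<le> a (Suc k) * (?q ^ Suc k - 1)" by (rule step[OF Suc.prems])
      finally have "a k < a (Suc k)" by (metis mult_less_cancel2)
      then show ?case using pos by simp
    qed
    have AP: "0 < (-1) ^ r * (\<Sum>d\<le>r. (-1) ^ d * int (a d))"
      using alt_pos[of a r] inc a0 by simp
    have "(\<Sum>d\<le>?n. (-1) ^ d * int (a d)) = (\<Sum>d\<le>r. (-1) ^ d * int (a d))"
      by (rule sum.mono_neutral_right) (use rn big in auto)
    hence "(\<Sum>d\<le>?n. (-1) ^ d * int (a d)) \<noteq> 0" using AP by auto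
    then show ?thesis using E1 E2 S by simp
  qed
  show ?thesis using uniform nonuniform by blast
qed

end
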